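(* Let $a$ be an automatic sequence and $\alpha$ a letter such that the density of $\{n: a(n)=\alpha\}$ exists and equals $0$. Then the upper Banach density of $\{n:a(n)=\alpha\}$, namely $\limsup_{N-M\to\infty}\frac{\#\{M\le n\le N: a(n)=\alpha\}}{N-M+1}$, is also $0$.
   Context: A sequence $a$ on a finite alphabet is automatic if for some $k\ge2$ there is a finite set of states $Q$, a transition map $\delta:Q\times\{0,\dots,k-1\}\to Q$ extended to words letter by letter, an initial state $q_0$ and an output map $\tau$ with $a(n)=\tau(\delta(q_0,(n)_k))$, $(n)_k$ being the base-$k$ expansion of $n$ (most significant digit first). *)

theory Defs
  imports Complex_Main
begin

fun digits_lsd :: "nat \<Rightarrow> nat \<Rightarrow> nat list" where
  "digits_lsd k n = (if k < 2 \<or> n = 0 then [] else n mod k # digits_lsd k (n div k))"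

definition base_expansion :: "nat \<Rightarrow> nat \<Rightarrow> nat list" where
  "base_expansion k n = rev (digits_lsd k n)"

definition delta_star :: "('q \<Rightarrow> nat \<Rightarrow> 'q) \<Rightarrow> 'q \<Rightarrow> nat list \<Rightarrow> 'q" where
  "delta_star \<delta> q w = foldl \<delta> q w"

text \<open>Automatic sequences. States are taken from a finite set of naturals
 (any finite state set can be relabelled this way).\<close>
definition automatic :: "(nat \<Rightarrow> 'b) \<Rightarrow> bool" where
  "automatic a \<longleftrightarrow> finite (range a) \<and>
     (\<exists>k::nat. k \<ge> 2 \<and> (\<exists>(Q::nat set) \<delta> q0 (\<tau>::nat \<Rightarrow> 'b).
        finite Q \<and> q0 \<in> Q \<and> (\<forall>q\<in>Q. \<forall>d<k. \<delta> q d \<in> Q) \<and>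
        (\<forall>n. a n = \<tau> (delta_star \<delta> q0 (base_expansion k n)))))"

definition has_density :: "nat set \<Rightarrow> real \<Rightarrow> bool" where
  "has_density S d \<longleftrightarrow>
     ((\<lambda>N. real (card (S \<inter> {..<N})) / real N) \<longlonglongrightarrow> d)"

definition upper_banach_density :: "nat set \<Rightarrow> real" where
  "upper_banach_density S =
     (INF L::nat. SUP p \<in> {(M, N). M + L \<le> N}.
        real (card (S \<inter> {fst p..snd p})) / real (snd p - fst p + 1))"

end

theory Submission
  imports Defs
begin

declare digits_lsd.simps[simp del]

fun pad :: "nat \<Rightarrow> nat \<Rightarrow> nat \<Rightarrow> nat list" where
  "pad k 0 m = []"
| "pad k (Suc j) m = m mod k # pad k j (m div k)"

lemma digits_split:
  assumes k: "k \<ge> 2" and u: "u \<ge> 1"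
  shows "m < k^j \<Longrightarrow> digits_lsd k (u*k^j+m) = pad k j m @ digits_lsd k u"
proof (induction j arbitrary: m)
  case 0
  then show ?case by simp
next
  case (Suc j)
  let ?n = "u*k^Suc j + m"
  have nz: "?n \<noteq> 0" using u k by simp
  have e: "?n = (u*k^j)*k + m" by simp
  have kpos: "k > 0" using k by simp
  have m1: "?n mod k = m mod k" using e by (metis mod_mult_self3)
  have d1: "?n div k = u*k^j + m div k" unfolding e using div_mult_self3[of k "u*k^j" m] kpos by simp
  have lt: "m div k < k^j" using Suc.prems kpos
    by (simp add: div_less_iff_less_mult mult.commute)
  have "digits_lsd k ?n = ?n mod k # digits_lsd k (?n div k)"
    using nz k by (subst digits_lsd.simps) simp
  also have "\<dots> = pad k (Suc j) m @ digits_lsd k u"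
    using m1 d1 Suc.IH[OF lt] by simp
  finally show ?case .
qed

lemma digits_lt: "d \<in> set (digits_lsd k n) \<Longrightarrow> d < k"
proof (induction k n rule: digits_lsd.induct)
  case (1 k n)
  then show ?case
    by (cases "k < 2 \<or> n = 0") (auto simp: digits_lsd.simps[of k n])
qed

lemma foldl_in: "q \<in> Q \<Longrightarrow> \<forall>q\<in>Q. \<forall>d<k. \<delta> q d \<in> Q \<Longrightarrow> \<forall>d\<in>set w. d < k \<Longrightarrow> foldl \<delta> q w \<in> Q"
  by (induction w arbitrary: q) auto

theorem lemma3p7:
  fixes a :: "nat \<Rightarrow> 'b" and \<alpha> :: 'b
  assumes "automatic a"
    and "has_density {n. a n = \<alpha>} 0"
  shows "upper_banach_density {n. a n = \<alpha>} = 0"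
proof -
  let ?S = "{n. a n = \<alpha>}"
  from assms(1) obtain k Q \<delta> q0 \<tau> where k: "k\<ge>2" and fQ: "finite (Q::nat set)" and q0: "q0\<in>Q"
    and cl: "\<forall>q\<in>Q. \<forall>d<k. \<delta> q d \<in> Q"
    and rep: "\<forall>n. a n = \<tau> (delta_star \<delta> q0 (base_expansion k n))"
  proof -
    from assms(1) have "\<exists>k::nat. k \<ge> 2 \<and> (\<exists>(Q::nat set) \<delta> q0 (\<tau>::nat \<Rightarrow> 'b).
        finite Q \<and> q0 \<in> Q \<and> (\<forall>q\<in>Q. \<forall>d<k. \<delta> q d \<in> Q) \<and>
        (\<forall>n. a n = \<tau> (delta_star \<delta> q0 (base_expansion k n))))"
      unfolding automatic_def by (rule conjunct2)
    then show ?thesis by (elim conjE exE) (rule that; assumption)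
  qed
  define st where "st u = foldl \<delta> q0 (rev (digits_lsd k u))" for u
  define g where "g j q = card {m. m < k^j \<and> \<tau> (foldl \<delta> q (rev (pad k j m))) = \<alpha>}" for j q
  have key: "a (u*k^j+m) = \<tau> (foldl \<delta> (st u) (rev (pad k j m)))" if "u\<ge>1" "m<k^j" for u j m
    using rep digits_split[OF k that] by (simp add: base_expansion_def delta_star_def st_def)
  have blk: "card (?S \<inter> {u*k^j..<u*k^j+k^j}) = g j (st u)" if "u\<ge>1" for u j
  proof -
    have "?S \<inter> {u*k^j..<u*k^j+k^j} = (\<lambda>m. u*k^j+m) ` {m. m < k^j \<and> \<tau> (foldl \<delta> (st u) (rev (pad k j m))) = \<alpha>}"
    proof
      show "?S \<inter> {u*k^j..<u*k^j+k^j} \<subseteq> (\<lambda>m. u*k^j+m) ` {m. m < k^j \<and> \<tau> (foldl \<delta> (st u) (rev (pad k j m))) = \<alpha>}"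
      proof
        fix n assume n: "n \<in> ?S \<inter> {u*k^j..<u*k^j+k^j}"
        define m where "m = n - u*k^j"
        have nm: "n = u*k^j + m" "m < k^j" using n m_def by auto
        then show "n \<in> (\<lambda>m. u*k^j+m) ` {m. m < k^j \<and> \<tau> (foldl \<delta> (st u) (rev (pad k j m))) = \<alpha>}"
          using n key[OF that nm(2)] by auto
      qed
    next
      show "(\<lambda>m. u*k^j+m) ` {m. m < k^j \<and> \<tau> (foldl \<delta> (st u) (rev (pad k j m))) = \<alpha>} \<subseteq> ?S \<inter> {u*k^j..<u*k^j+k^j}"
        using key[OF that] by auto
    qed
    then show ?thesis by (simp add: g_def card_image inj_on_def)
  qed
  have blk0: "card (?S \<inter> {u*K..<u*K+K}) \<le> K" for u K
  proof -
    have "card (?S \<inter> {u*K..<u*K+K}) \<le> card {u*K..<u*K+K}" by (rule card_mono) auto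
    then show ?thesis by simp
  qed
  have stQ: "st u \<in> Q" for u
  proof -
    have "\<forall>d\<in>set (rev (digits_lsd k u)). d < k" using digits_lt by simp
    then show ?thesis unfolding st_def by (rule foldl_in[OF q0 cl])
  qed
  have dens: "(\<lambda>N. real (card (?S \<inter> {..<N})) / real N) \<longlonglongrightarrow> 0"
    using assms(2) by (simp add: has_density_def)
  have lim: "(\<lambda>j. real (g j (st u)) / real (k^j)) \<longlonglongrightarrow> 0" if u: "u\<ge>1" for u
  proof -
    have sm: "strict_mono (\<lambda>j. (u+1)*k^j)"
    proof (unfold strict_mono_Suc_iff, intro allI)
      fix n :: nat
      have "k^n < k^Suc n" using k by (intro power_strict_increasing) auto
      then show "(u+1)*k^n < (u+1)*k^Suc n" by (intro mult_strict_left_mono) auto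
    qed
    have fl: "filterlim (\<lambda>j. (u+1)*k^j) at_top sequentially"
      using filterlim_subseq[OF sm] .
    have h: "(\<lambda>j. real (card (?S \<inter> {..<(u+1)*k^j})) / real ((u+1)*k^j)) \<longlonglongrightarrow> 0"
      using filterlim_compose[OF dens fl] by (simp add: o_def)
    have h2: "(\<lambda>j. real (u+1) * (real (card (?S \<inter> {..<(u+1)*k^j})) / real ((u+1)*k^j))) \<longlonglongrightarrow> 0"
      using tendsto_mult_right_zero[OF h] by simp
    have le: "real (g j (st u)) / real (k^j) \<le> real (u+1) * (real (card (?S \<inter> {..<(u+1)*k^j})) / real ((u+1)*k^j))" for j
    proof -
      have "g j (st u) = card (?S \<inter> {u*k^j..<u*k^j+k^j})" using blk[OF u] by simp
      also have "\<dots> \<le> card (?S \<inter> {..<(u+1)*k^j})" by (rule card_mono) auto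
      finally have c: "real (g j (st u)) \<le> real (card (?S \<inter> {..<(u+1)*k^j}))" by simp
      have kp: "real (k^j) > 0" using k by simp
      have gen: "x > 0 \<Longrightarrow> x*(c/(x*y)) = c/y" for x y c :: real by simp
      have "real (u+1) * (real (card (?S \<inter> {..<(u+1)*k^j})) / real ((u+1)*k^j))
          = real (card (?S \<inter> {..<(u+1)*k^j})) / real (k^j)"
        unfolding of_nat_mult[of "u+1" "k^j"] by (rule gen) simp
      then show ?thesis using c kp by (simp add: divide_right_mono)
    qed
    show ?thesis
      by (rule real_tendsto_sandwich[OF always_eventually always_eventually tendsto_const h2])
         (simp, intro allI le)
  qed
  have main: "\<exists>L. \<forall>M N. M + L \<le> N \<longrightarrow> real (card (?S \<inter> {M..N})) / real (N - M + 1) \<le> 2*e" if e: "e > 0" for e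
  proof -
    have fR: "finite (st ` {1..})" using fQ stQ by (meson finite_subset image_subsetI)
    have "\<forall>\<^sub>F j in sequentially. \<forall>q\<in>st ` {1..}. real (g j q) / real (k^j) < e"
      using fR
    proof (rule eventually_ball_finite)
      show "\<forall>q\<in>st ` {1..}. \<forall>\<^sub>F j in sequentially. real (g j q) / real (k^j) < e"
      proof
        fix q assume "q \<in> st ` {1..}"
        then obtain u where u: "u \<ge> 1" "q = st u" by auto
        show "\<forall>\<^sub>F j in sequentially. real (g j q) / real (k^j) < e"
          using order_tendstoD(2)[OF lim[OF u(1)] e] u(2) by simp
      qed
    qed
    then obtain N where N: "\<forall>n\<ge>N. \<forall>q\<in>st ` {1..}. real (g n q) / real (k^n) < e"
      by (auto simp: eventually_sequentially)
    define j where "j = N"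
    have j: "\<forall>q\<in>st ` {1..}. real (g j q) / real (k^j) < e" using N j_def by simp
    define K where "K = k^j"
    have Kp: "K > 0" using k K_def by simp
    have cu: "real (card (?S \<inter> {u*K..<u*K+K})) \<le> e*K + (if u = 0 then real K else 0)" for u
    proof (cases "u = 0")
      case True
      have "real (card (?S \<inter> {u*K..<u*K+K})) \<le> real K" using blk0[of u K] by simp
      moreover have "e * real K \<ge> 0" using e by simp
      ultimately show ?thesis using True by simp
    next
      case False
      then have "real (card (?S \<inter> {u*K..<u*K+K})) = real (g j (st u))" using blk[of u j] K_def by simp
      also have "\<dots> \<le> e*K"
      proof -
        have "u \<in> {1..}" using False by simp
        then have "real (g j (st u)) / real K < e" using j K_def by blast
        then show ?thesis using Kp by (simp add: divide_less_eq)
      qed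
      finally show ?thesis using False by simp
    qed
    have ib: "real (card (?S \<inter> {M..N})) \<le> e * (real N - real M + 1) + 2*e*K + K" if MN: "M \<le> N" for M N
    proof -
      let ?I = "{M div K..N div K}"
      have sub: "?S \<inter> {M..N} \<subseteq> (\<Union>u\<in>?I. ?S \<inter> {u*K..<u*K+K})"
      proof
        fix n assume n: "n \<in> ?S \<inter> {M..N}"
        have "n div K \<in> ?I" using n by (auto intro: div_le_mono)
        moreover have "n \<in> ?S \<inter> {(n div K)*K..<(n div K)*K+K}"
          using n Kp mod_less_divisor[OF Kp, of n] by (auto simp: minus_mod_eq_div_mult[symmetric])
        ultimately show "n \<in> (\<Union>u\<in>?I. ?S \<inter> {u*K..<u*K+K})" by blast
      qed
      have "card (?S \<inter> {M..N}) \<le> card (\<Union>u\<in>?I. ?S \<inter> {u*K..<u*K+K})"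
        by (rule card_mono) (use sub in auto)
      also have "\<dots> \<le> (\<Sum>u\<in>?I. card (?S \<inter> {u*K..<u*K+K}))" by (rule card_UN_le) simp
      finally have cn: "card (?S \<inter> {M..N}) \<le> (\<Sum>u\<in>?I. card (?S \<inter> {u*K..<u*K+K}))" .
      have "real (card (?S \<inter> {M..N})) \<le> (\<Sum>u\<in>?I. real (card (?S \<inter> {u*K..<u*K+K})))"
        using cn by (simp only: of_nat_sum[symmetric] of_nat_le_iff)
      also have "\<dots> \<le> (\<Sum>u\<in>?I. e*K + (if u = 0 then real K else 0))"
        by (rule sum_mono) (rule cu)
      also have "\<dots> = e*K*card ?I + (if 0 \<in> ?I then real K else 0)"
        by (simp add: sum.distrib sum.delta)
      also have "\<dots> \<le> e*K*card ?I + K" by simp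
      finally have c1: "real (card (?S \<inter> {M..N})) \<le> e*K*card ?I + K" .
      have a1: "(N div K) * K \<le> N" by (simp add: div_times_less_eq_dividend)
      have a2: "M < (M div K) * K + K" using Kp
        by (metis add.commute div_mult_mod_eq mod_less_divisor nat_add_left_cancel_less)
      have a3: "M div K \<le> N div K" using MN by (simp add: div_le_mono)
      have cI: "card ?I = N div K + 1 - M div K" by simp
      have "real (card ?I) * K = (real (N div K) - real (M div K) + 1) * K" using cI a3 by simp
      also have "\<dots> = real ((N div K) * K) - real ((M div K) * K) + K" by (simp add: algebra_simps)
      also have "\<dots> \<le> real N - real M + 1 + 2*K" using a1 a2 by linarith
      finally have "real (card ?I) * K \<le> real N - real M + 1 + 2*K" .
      then have "e * (real (card ?I) * K) \<le> e * (real N - real M + 1 + 2*K)"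
        using e by (intro mult_left_mono) auto
      then show ?thesis using c1 by (simp add: algebra_simps)
    qed
    obtain L :: nat where L: "L \<ge> (2*e*K + K) / e" by (meson real_arch_simple)
    show ?thesis
    proof (intro exI allI impI)
      fix M N :: nat assume MLN: "M + L \<le> N"
      have D: "real (N - M + 1) = real N - real M + 1" using MLN by simp
      have Dp: "real N - real M + 1 > 0" using MLN by simp
      have DL: "real N - real M + 1 \<ge> (2*e*K + K) / e" using L MLN by simp
      have "2*e*K + K \<le> e * (real N - real M + 1)" using DL e by (simp add: divide_le_eq mult.commute)
      then have "real (card (?S \<inter> {M..N})) \<le> 2*e * (real N - real M + 1)"
        using ib[of M N] MLN by simp
      then show "real (card (?S \<inter> {M..N})) / real (N - M + 1) \<le> 2*e"
        using D Dp by (simp add: divide_le_eq algebra_simps)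
    qed
  qed
  define r where "r p = real (card (?S \<inter> {fst p..snd p})) / real (snd p - fst p + 1)" for p :: "nat \<times> nat"
  define f where "f L = (SUP p \<in> {(M, N). M + L \<le> N}. r p)" for L :: nat
  have r0: "r p \<ge> 0" for p by (simp add: r_def)
  have r1: "r p \<le> 1" for p
  proof -
    have "card (?S \<inter> {fst p..snd p}) \<le> card {fst p..snd p}" by (rule card_mono) auto
    then have "real (card (?S \<inter> {fst p..snd p})) \<le> real (snd p - fst p + 1)" by simp
    then show ?thesis by (simp add: r_def divide_le_eq)
  qed
  have bdd: "bdd_above (r ` A)" for A by (rule bdd_aboveI[where M=1]) (use r1 in auto)
  have f0: "f L \<ge> 0" for L
  proof -
    have "r (0, L) \<le> f L" unfolding f_def by (rule cSUP_upper[OF _ bdd]) auto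
    then show ?thesis using r0[of "(0,L)"] by linarith
  qed
  have ube: "upper_banach_density ?S = (INF L. f L)"
    by (simp add: upper_banach_density_def f_def r_def)
  have lo: "(INF L. f L) \<ge> 0" by (rule cINF_greatest) (auto intro: f0)
  have hi: "(INF L. f L) \<le> 2*e" if e: "e > 0" for e
  proof -
    obtain L where L: "\<forall>M N. M + L \<le> N \<longrightarrow> r (M,N) \<le> 2*e"
      using main[OF e] by (auto simp: r_def)
    have "(INF L. f L) \<le> f L" by (rule cINF_lower) (auto intro: bdd_belowI f0)
    also have "f L \<le> 2*e" unfolding f_def
      by (rule cSUP_least) (use L in auto)
    finally show ?thesis .
  qed
  have "(INF L. f L) \<le> 0"
  proof (rule ccontr)
    assume "\<not> (INF L. f L) \<le> 0"
    then have "(INF L. f L) > 0" by simp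
    then have "(INF L. f L) \<le> 2 * ((INF L. f L)/4)" by (intro hi) simp
    then show False using \<open>(INF L. f L) > 0\<close> by simp
  qed
  then show ?thesis using lo ube by simp
qed

end
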